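(* Let $(V,\{\nu_n\})$ be an $L^\infty$-MOS and $S\subseteq V$ a subspace. Then $S$ is the kernel of a completely gauge-bounded linear map $\phi:V\to W$ into some $L^\infty$-MOS $(W,\{\omega_n\})$ if and only if $S$ is an $L^\infty$-MOS ideal of $V$. In the latter case the quotient map $\pi:V\to V/S$ is completely gauge-contractive with respect to the quotient gauges $q_n(A+M_n(S)_{sa})=\inf\{\nu_n(B):B\in A+M_n(S)_{sa}\}$, and $\ker\pi=S$.
   Context: An $L^\infty$-MOS is a complex $*$-vector space $V$ ($M_n(V)$ with $(x_{ij})^*=(x_{ji}^* )$, self-adjoint part $M_n(V)_{sa}$) with proper gauges $\nu_n:M_n(V)_{sa}\to[0,\infty)$ (subadditive, positively homogeneous, $\nu_n(A)=\nu_n(-A)=0\Rightarrow A=0$) such that $\nu_k(X^*AX)\le\|X\|^2\nu_n(A)$ for scalar $X\in M_{n,k}$ and $\nu_{n+k}(A\oplus B)=\max\{\nu_n(A),\nu_k(B)\}$. A linear map $\phi:(V,\{\nu_n\})\to(W,\{\omega_n\})$ is completely gauge-bounded if $\phi(x^* )=\phi(x)^*$ and there is $C>0$ with $\omega_n(\phi^{(n)}(A))\le C\nu_n(A)$ for all $n$, $A\in M_n(V)_{sa}$; completely gauge-contractive if $C=1$ works. For a gauged real vector space $(E,\nu)$, a subspace $T$ is a gauge ideal if whenever $x\in E$ and sequences $(a_j),(b_j)\subseteq T$ satisfy $\nu(x-a_j)\to0$ and $\nu(b_j-x)\to0$, then $x\in T$. A self-adjoint subspace $S\subseteq V$ is an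 $L^\infty$-MOS ideal if $S\cap V_{sa}$ is a gauge ideal of $(V_{sa},\nu_1)$. $V/S$ has involution $(x+S)^*=x^*+S$ and $M_n(V/S)_{sa}$ is identified with $M_n(V)_{sa}/M_n(S)_{sa}$. *)

theory Defs
  imports "HOL-Analysis.Analysis"
begin

definition star_space :: "(complex \<Rightarrow> 'v::ab_group_add \<Rightarrow> 'v) \<Rightarrow> ('v \<Rightarrow> 'v) \<Rightarrow> bool" where
  "star_space sc st \<longleftrightarrow> vector_space sc \<and> (\<forall>x. st (st x) = x) \<and>
     (\<forall>x y. st (x + y) = st x + st y) \<and> (\<forall>c x. st (sc c x) = sc (cnj c) (st x))"

text \<open>n x n matrices over 'v are functions nat => nat => 'v vanishing outside {0..<n}^2.\<close>

definition is_mat :: "nat \<Rightarrow> (nat \<Rightarrow> nat \<Rightarrow> 'v::zero) \<Rightarrow> bool" where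
  "is_mat n A \<longleftrightarrow> (\<forall>i j. \<not> (i < n \<and> j < n) \<longrightarrow> A i j = 0)"

definition mstar :: "('v \<Rightarrow> 'v) \<Rightarrow> (nat \<Rightarrow> nat \<Rightarrow> 'v) \<Rightarrow> (nat \<Rightarrow> nat \<Rightarrow> 'v)" where
  "mstar st A = (\<lambda>i j. st (A j i))"

definition sa_mat :: "('v::zero \<Rightarrow> 'v) \<Rightarrow> nat \<Rightarrow> (nat \<Rightarrow> nat \<Rightarrow> 'v) \<Rightarrow> bool" where
  "sa_mat st n A \<longleftrightarrow> is_mat n A \<and> mstar st A = A"

definition madd :: "(nat \<Rightarrow> nat \<Rightarrow> 'v::plus) \<Rightarrow> (nat \<Rightarrow> nat \<Rightarrow> 'v) \<Rightarrow> (nat \<Rightarrow> nat \<Rightarrow> 'v)" where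
  "madd A B = (\<lambda>i j. A i j + B i j)"

definition mneg :: "(nat \<Rightarrow> nat \<Rightarrow> 'v::uminus) \<Rightarrow> (nat \<Rightarrow> nat \<Rightarrow> 'v)" where
  "mneg A = (\<lambda>i j. - A i j)"

definition msub :: "(nat \<Rightarrow> nat \<Rightarrow> 'v::minus) \<Rightarrow> (nat \<Rightarrow> nat \<Rightarrow> 'v) \<Rightarrow> (nat \<Rightarrow> nat \<Rightarrow> 'v)" where
  "msub A B = (\<lambda>i j. A i j - B i j)"

definition mscale :: "(complex \<Rightarrow> 'v \<Rightarrow> 'v) \<Rightarrow> complex \<Rightarrow> (nat \<Rightarrow> nat \<Rightarrow> 'v) \<Rightarrow> (nat \<Rightarrow> nat \<Rightarrow> 'v)" where
  "mscale sc c A = (\<lambda>i j. sc c (A i j))"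

definition mmap :: "('v \<Rightarrow> 'w) \<Rightarrow> (nat \<Rightarrow> nat \<Rightarrow> 'v) \<Rightarrow> (nat \<Rightarrow> nat \<Rightarrow> 'w)" where
  "mmap f A = (\<lambda>i j. f (A i j))"

text \<open>Compression X^* A X for a scalar n x k matrix X (entries X i j, i < n, j < k).\<close>
definition compress :: "(complex \<Rightarrow> 'v::comm_monoid_add \<Rightarrow> 'v) \<Rightarrow> nat \<Rightarrow> nat \<Rightarrow>
    (nat \<Rightarrow> nat \<Rightarrow> complex) \<Rightarrow> (nat \<Rightarrow> nat \<Rightarrow> 'v) \<Rightarrow> (nat \<Rightarrow> nat \<Rightarrow> 'v)" where
  "compress sc n k X A = (\<lambda>a b. if a < k \<and> b < k then
      (\<Sum>i<n. \<Sum>j<n. sc (cnj (X i a) * X j b) (A i j)) else 0)"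

definition opnorm :: "nat \<Rightarrow> nat \<Rightarrow> (nat \<Rightarrow> nat \<Rightarrow> complex) \<Rightarrow> real" where
  "opnorm n k X = Sup {sqrt (\<Sum>i<n. (cmod (\<Sum>j<k. X i j * v j))\<^sup>2) | v.
                         (\<Sum>j<k. (cmod (v j))\<^sup>2) \<le> 1}"

definition dsum :: "nat \<Rightarrow> nat \<Rightarrow> (nat \<Rightarrow> nat \<Rightarrow> 'v::zero) \<Rightarrow> (nat \<Rightarrow> nat \<Rightarrow> 'v) \<Rightarrow> (nat \<Rightarrow> nat \<Rightarrow> 'v)" where
  "dsum n k A B = (\<lambda>i j. if i < n \<and> j < n then A i j
      else if n \<le> i \<and> n \<le> j \<and> i < n + k \<and> j < n + k then B (i - n) (j - n) else 0)"

text \<open>The gauge axioms for a family nu_n on M_n(V)_sa (n >= 1); properness is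
  formulated relative to a predicate Z n A saying "A is zero" (for V itself,
  Z n A is A = 0; for a quotient V/S, Z n A says A lies in M_n(S)).\<close>
definition mos_gauges :: "(complex \<Rightarrow> 'v::ab_group_add \<Rightarrow> 'v) \<Rightarrow> ('v \<Rightarrow> 'v) \<Rightarrow>
    (nat \<Rightarrow> (nat \<Rightarrow> nat \<Rightarrow> 'v) \<Rightarrow> real) \<Rightarrow> (nat \<Rightarrow> (nat \<Rightarrow> nat \<Rightarrow> 'v) \<Rightarrow> bool) \<Rightarrow> bool" where
  "mos_gauges sc st \<nu> Z \<longleftrightarrow>
     (\<forall>n\<ge>1. \<forall>A. sa_mat st n A \<longrightarrow> 0 \<le> \<nu> n A) \<and>
     (\<forall>n\<ge>1. \<forall>A B. sa_mat st n A \<longrightarrow> sa_mat st n B \<longrightarrow> \<nu> n (madd A B) \<le> \<nu> n A + \<nu> n B) \<and>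
     (\<forall>n\<ge>1. \<forall>A. \<forall>t::real. sa_mat st n A \<longrightarrow> t > 0 \<longrightarrow> \<nu> n (mscale sc (complex_of_real t) A) = t * \<nu> n A) \<and>
     (\<forall>n\<ge>1. \<forall>A. sa_mat st n A \<longrightarrow> \<nu> n A = 0 \<longrightarrow> \<nu> n (mneg A) = 0 \<longrightarrow> Z n A) \<and>
     (\<forall>n\<ge>1. \<forall>k\<ge>1. \<forall>X A. sa_mat st n A \<longrightarrow>
         \<nu> k (compress sc n k X A) \<le> (opnorm n k X)\<^sup>2 * \<nu> n A) \<and>
     (\<forall>n\<ge>1. \<forall>k\<ge>1. \<forall>A B. sa_mat st n A \<longrightarrow> sa_mat st k B \<longrightarrow>
         \<nu> (n + k) (dsum n k A B) = max (\<nu> n A) (\<nu> k B))"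

definition linf_mos :: "(complex \<Rightarrow> 'v::ab_group_add \<Rightarrow> 'v) \<Rightarrow> ('v \<Rightarrow> 'v) \<Rightarrow>
    (nat \<Rightarrow> (nat \<Rightarrow> nat \<Rightarrow> 'v) \<Rightarrow> real) \<Rightarrow> bool" where
  "linf_mos sc st \<nu> \<longleftrightarrow> star_space sc st \<and> mos_gauges sc st \<nu> (\<lambda>n A. A = (\<lambda>i j. 0))"

definition cg_bounded :: "(complex \<Rightarrow> 'v::ab_group_add \<Rightarrow> 'v) \<Rightarrow> ('v \<Rightarrow> 'v) \<Rightarrow>
    (nat \<Rightarrow> (nat \<Rightarrow> nat \<Rightarrow> 'v) \<Rightarrow> real) \<Rightarrow>
    (complex \<Rightarrow> 'w::ab_group_add \<Rightarrow> 'w) \<Rightarrow> ('w \<Rightarrow> 'w) \<Rightarrow>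
    (nat \<Rightarrow> (nat \<Rightarrow> nat \<Rightarrow> 'w) \<Rightarrow> real) \<Rightarrow> ('v \<Rightarrow> 'w) \<Rightarrow> bool" where
  "cg_bounded scV stV \<nu> scW stW \<omega> \<phi> \<longleftrightarrow> Vector_Spaces.linear scV scW \<phi> \<and>
     (\<forall>x. \<phi> (stV x) = stW (\<phi> x)) \<and>
     (\<exists>C>0. \<forall>n\<ge>1. \<forall>A. sa_mat stV n A \<longrightarrow> \<omega> n (mmap \<phi> A) \<le> C * \<nu> n A)"

definition gauge_ideal :: "'v::ab_group_add set \<Rightarrow> ('v \<Rightarrow> real) \<Rightarrow> 'v set \<Rightarrow> bool" where
  "gauge_ideal E g T \<longleftrightarrow> (\<forall>x\<in>E. \<forall>a b::nat \<Rightarrow> 'v.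
      (\<forall>j. a j \<in> T) \<longrightarrow> (\<forall>j. b j \<in> T) \<longrightarrow>
      (\<lambda>j. g (x - a j)) \<longlonglongrightarrow> 0 \<longrightarrow> (\<lambda>j. g (b j - x)) \<longlonglongrightarrow> 0 \<longrightarrow> x \<in> T)"

definition m1 :: "'v::zero \<Rightarrow> (nat \<Rightarrow> nat \<Rightarrow> 'v)" where
  "m1 x = (\<lambda>i j. if i = 0 \<and> j = 0 then x else 0)"

definition mos_ideal :: "(complex \<Rightarrow> 'v::ab_group_add \<Rightarrow> 'v) \<Rightarrow> ('v \<Rightarrow> 'v) \<Rightarrow>
    (nat \<Rightarrow> (nat \<Rightarrow> nat \<Rightarrow> 'v) \<Rightarrow> real) \<Rightarrow> 'v set \<Rightarrow> bool" where
  "mos_ideal sc st \<nu> S \<longleftrightarrow> module.subspace sc S \<and> (\<forall>x\<in>S. st x \<in> S) \<and>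
     gauge_ideal {x. st x = x} (\<lambda>x. \<nu> 1 (m1 x)) (S \<inter> {x. st x = x})"

definition sa_mat_in :: "('v::zero \<Rightarrow> 'v) \<Rightarrow> nat \<Rightarrow> 'v set \<Rightarrow> (nat \<Rightarrow> nat \<Rightarrow> 'v) \<Rightarrow> bool" where
  "sa_mat_in st n S C \<longleftrightarrow> sa_mat st n C \<and> (\<forall>i j. C i j \<in> S)"

text \<open>Quotient gauge q_n(A + M_n(S)_sa) = inf { nu_n(B) : B in A + M_n(S)_sa },
  written as a function of the representative A.\<close>
definition qgauge :: "('v::ab_group_add \<Rightarrow> 'v) \<Rightarrow> (nat \<Rightarrow> (nat \<Rightarrow> nat \<Rightarrow> 'v) \<Rightarrow> real) \<Rightarrow>
    'v set \<Rightarrow> nat \<Rightarrow> (nat \<Rightarrow> nat \<Rightarrow> 'v) \<Rightarrow> real" where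
  "qgauge st \<nu> S n A = Inf {\<nu> n B | B. sa_mat st n B \<and> sa_mat_in st n S (msub B A)}"

definition qmap :: "'v set \<Rightarrow> 'v::ab_group_add \<Rightarrow> 'v set" where
  "qmap S x = (\<lambda>s. x + s) ` S"

text \<open>(V/S, {q_n}) is an L^infinity-MOS, expressed through representatives using the
  identification M_n(V/S)_sa = M_n(V)_sa / M_n(S)_sa: the involution is well defined
  (S self-adjoint subspace), and the q_n satisfy the gauge axioms, properness meaning
  that the class of A is zero, i.e. A in M_n(S).\<close>
definition quotient_linf_mos :: "(complex \<Rightarrow> 'v::ab_group_add \<Rightarrow> 'v) \<Rightarrow> ('v \<Rightarrow> 'v) \<Rightarrow>
    (nat \<Rightarrow> (nat \<Rightarrow> nat \<Rightarrow> 'v) \<Rightarrow> real) \<Rightarrow> 'v set \<Rightarrow> bool" where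
  "quotient_linf_mos sc st \<nu> S \<longleftrightarrow> star_space sc st \<and> module.subspace sc S \<and>
     (\<forall>x\<in>S. st x \<in> S) \<and>
     mos_gauges sc st (qgauge st \<nu> S) (\<lambda>n A. \<forall>i j. A i j \<in> S)"

end

theory Submission
  imports Defs
begin


lemma sum1: "i < (n::nat) \<Longrightarrow> (\<And>q. q < n \<Longrightarrow> q \<noteq> i \<Longrightarrow> h q = 0) \<Longrightarrow> (\<Sum>q<n. h q) = (h i :: 'a::comm_monoid_add)"
proof -
  assume i: "i < n" and h: "\<And>q. q < n \<Longrightarrow> q \<noteq> i \<Longrightarrow> h q = 0"
  have "(\<Sum>q<n. h q) = (\<Sum>q\<in>{i}. h q)"
    apply (rule sum.mono_neutral_right) using i h by auto
  thus ?thesis by simp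
qed

lemma sum2: "i < (n::nat) \<Longrightarrow> j < n \<Longrightarrow> i \<noteq> j \<Longrightarrow> (\<And>q. q < n \<Longrightarrow> q \<noteq> i \<Longrightarrow> q \<noteq> j \<Longrightarrow> h q = 0) \<Longrightarrow>
   (\<Sum>q<n. h q) = h i + (h j :: 'a::comm_monoid_add)"
proof -
  assume i: "i < n" "j < n" "i \<noteq> j" and h: "\<And>q. q < n \<Longrightarrow> q \<noteq> i \<Longrightarrow> q \<noteq> j \<Longrightarrow> h q = 0"
  have "(\<Sum>q<n. h q) = (\<Sum>q\<in>{i,j}. h q)"
    apply (rule sum.mono_neutral_right) using i h by auto
  thus ?thesis using i by simp
qed

lemma opnorm_le: "0 \<le> M \<Longrightarrow> (\<And>v. (\<Sum>j<k. (cmod (v j))\<^sup>2) \<le> 1 \<Longrightarrow> (\<Sum>i<n. (cmod (\<Sum>j<k. X i j * v j))\<^sup>2) \<le> M\<^sup>2)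
   \<Longrightarrow> (opnorm n k X)\<^sup>2 \<le> M\<^sup>2"
proof -
  assume M: "0 \<le> M" and H: "\<And>v. (\<Sum>j<k. (cmod (v j))\<^sup>2) \<le> 1 \<Longrightarrow> (\<Sum>i<n. (cmod (\<Sum>j<k. X i j * v j))\<^sup>2) \<le> M\<^sup>2"
  let ?T = "{sqrt (\<Sum>i<n. (cmod (\<Sum>j<k. X i j * v j))\<^sup>2) | v. (\<Sum>j<k. (cmod (v j))\<^sup>2) \<le> 1}"
  have ub: "x \<le> M" if "x \<in> ?T" for x
  proof -
    from that obtain v where v: "(\<Sum>j<k. (cmod (v j))\<^sup>2) \<le> 1" "x = sqrt (\<Sum>i<n. (cmod (\<Sum>j<k. X i j * v j))\<^sup>2)" by blast
    have "x \<le> sqrt (M\<^sup>2)" unfolding v(2) using H[OF v(1)] real_sqrt_le_mono by blast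
    thus ?thesis using M by simp
  qed
  have z: "0 \<in> ?T"
  proof -
    have "(\<Sum>j<k. (cmod ((\<lambda>_. 0::complex) j))\<^sup>2) \<le> 1" by simp
    moreover have "0 = sqrt (\<Sum>i<n. (cmod (\<Sum>j<k. X i j * (\<lambda>_. 0::complex) j))\<^sup>2)" by simp
    ultimately show ?thesis by (intro CollectI exI[of _ "\<lambda>_. 0"]) simp
  qed
  have bdd: "bdd_above ?T" using ub by (intro bdd_aboveI) blast
  have "0 \<le> opnorm n k X" unfolding opnorm_def using cSup_upper[OF z bdd] .
  moreover have "opnorm n k X \<le> M" unfolding opnorm_def
    by (rule cSup_least) (use z ub in auto)
  ultimately show ?thesis by (simp add: power_mono)
qed

lemma opnorm_col: "(\<And>p. cmod (X p 0) \<le> 1) \<Longrightarrow> (opnorm n 1 X)\<^sup>2 \<le> real n"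
proof -
  assume X: "\<And>p. cmod (X p 0) \<le> 1"
  have "(opnorm n 1 X)\<^sup>2 \<le> (sqrt (real n))\<^sup>2"
  proof (rule opnorm_le)
    fix v :: "nat \<Rightarrow> complex" assume "(\<Sum>j<1. (cmod (v j))\<^sup>2) \<le> 1"
    hence v: "cmod (v 0) \<le> 1" by (simp add: abs_square_le_1)
    have "(\<Sum>i<n. (cmod (\<Sum>j<1. X i j * v j))\<^sup>2) \<le> (\<Sum>i<n. 1)"
    proof (rule sum_mono)
      fix i
      have "cmod (X i 0 * v 0) \<le> 1" using X[of i] v by (simp add: norm_mult mult_le_one)
      thus "(cmod (\<Sum>j<1. X i j * v j))\<^sup>2 \<le> 1" by (simp add: abs_square_le_1)
    qed
    thus "(\<Sum>i<n. (cmod (\<Sum>j<1. X i j * v j))\<^sup>2) \<le> (sqrt (real n))\<^sup>2" by simp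
  qed simp
  thus ?thesis by simp
qed

definition pinc :: "nat \<Rightarrow> nat \<Rightarrow> nat \<Rightarrow> nat \<Rightarrow> complex" where
  "pinc s m = (\<lambda>i j. if i = j + s \<and> j < m then 1 else 0)"

lemma opnorm_pinc: "s + m \<le> N \<Longrightarrow> (opnorm N m (pinc s m))\<^sup>2 \<le> 1"
proof -
  assume N: "s + m \<le> N"
  have "(opnorm N m (pinc s m))\<^sup>2 \<le> 1\<^sup>2"
  proof (rule opnorm_le)
    fix v :: "nat \<Rightarrow> complex" assume v: "(\<Sum>j<m. (cmod (v j))\<^sup>2) \<le> 1"
    let ?f = "\<lambda>i. (cmod (\<Sum>j<m. pinc s m i j * v j))\<^sup>2"
    have f: "?f i = (if s \<le> i \<and> i < s + m then (cmod (v (i - s)))\<^sup>2 else 0)" for i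
    proof (cases "s \<le> i \<and> i < s + m")
      case True
      have "(\<Sum>j<m. pinc s m i j * v j) = pinc s m i (i - s) * v (i - s)"
        by (rule sum1) (use True in \<open>auto simp: pinc_def\<close>)
      moreover have "i - s < m" using True by arith
      ultimately show ?thesis using True by (simp add: pinc_def)
    next
      case False
      have "(\<Sum>j<m. pinc s m i j * v j) = 0"
        by (rule sum.neutral) (use False in \<open>auto simp: pinc_def\<close>)
      then show ?thesis using False by auto
    qed
    have "(\<Sum>i<N. ?f i) = (\<Sum>i\<in>(\<lambda>j. j + s) ` {..<m}. ?f i)"
    proof (rule sum.mono_neutral_right)
      show "(\<lambda>j. j + s) ` {..<m} \<subseteq> {..<N}" using N by auto
      show "\<forall>i\<in>{..<N} - (\<lambda>j. j + s) ` {..<m}. ?f i = 0"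
      proof
        fix i assume i: "i \<in> {..<N} - (\<lambda>j. j + s) ` {..<m}"
        have "\<not> (s \<le> i \<and> i < s + m)"
        proof
          assume h: "s \<le> i \<and> i < s + m"
          hence "i = (i - s) + s" "i - s < m" by arith+
          thus False using i by blast
        qed
        thus "?f i = 0" using f[of i] by auto
      qed
    qed simp
    also have "\<dots> = (\<Sum>j<m. ?f (j + s))"
      by (subst sum.reindex) (auto simp: inj_on_def)
    also have "\<dots> = (\<Sum>j<m. (cmod (v j))\<^sup>2)" by (simp add: f)
    finally show "(\<Sum>i<N. ?f i) \<le> 1\<^sup>2" using v by simp
  qed simp
  thus ?thesis by simp
qed

locale qctx = vector_space sc for sc :: "complex \<Rightarrow> 'v::ab_group_add \<Rightarrow> 'v" +
  fixes st :: "'v \<Rightarrow> 'v" and \<nu> :: "nat \<Rightarrow> (nat \<Rightarrow> nat \<Rightarrow> 'v) \<Rightarrow> real" and S :: "'v set"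
  assumes V: "linf_mos sc st \<nu>" and S: "subspace S" and Sst: "\<forall>x\<in>S. st x \<in> S"
begin

lemma st_invol[simp]: "st (st x) = x" and st_add[simp]: "st (x + y) = st x + st y"
  and st_sc: "st (sc c x) = sc (cnj c) (st x)"
  using V unfolding linf_mos_def star_space_def by auto

interpretation sta: additive st by standard simp

lemma st_0[simp]: "st 0 = 0" and st_neg[simp]: "st (- x) = - st x"
  and st_diff[simp]: "st (x - y) = st x - st y" and st_sum: "st (sum f A) = (\<Sum>a\<in>A. st (f a))"
  by (rule sta.zero sta.minus sta.diff sta.sum)+

lemma st_scr: "st (sc (complex_of_real t) x) = sc (complex_of_real t) (st x)"
  by (simp add: st_sc)

lemma G: "mos_gauges sc st \<nu> (\<lambda>n A. A = (\<lambda>i j. 0))"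
  using V unfolding linf_mos_def by auto

lemma nu_nonneg: "n \<ge> 1 \<Longrightarrow> sa_mat st n A \<Longrightarrow> 0 \<le> \<nu> n A"
  using G unfolding mos_gauges_def by blast
lemma nu_add: "n \<ge> 1 \<Longrightarrow> sa_mat st n A \<Longrightarrow> sa_mat st n B \<Longrightarrow> \<nu> n (madd A B) \<le> \<nu> n A + \<nu> n B"
  using G unfolding mos_gauges_def by blast
lemma nu_scale: "n \<ge> 1 \<Longrightarrow> sa_mat st n A \<Longrightarrow> t > 0 \<Longrightarrow> \<nu> n (mscale sc (complex_of_real t) A) = t * \<nu> n A"
  using G unfolding mos_gauges_def by blast
lemma nu_proper: "n \<ge> 1 \<Longrightarrow> sa_mat st n A \<Longrightarrow> \<nu> n A = 0 \<Longrightarrow> \<nu> n (mneg A) = 0 \<Longrightarrow> A = (\<lambda>i j. 0)"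
  using G unfolding mos_gauges_def by blast
lemma nu_compress: "n \<ge> 1 \<Longrightarrow> k \<ge> 1 \<Longrightarrow> sa_mat st n A \<Longrightarrow>
         \<nu> k (compress sc n k X A) \<le> (opnorm n k X)\<^sup>2 * \<nu> n A"
  using G unfolding mos_gauges_def by blast
lemma nu_dsum: "n \<ge> 1 \<Longrightarrow> k \<ge> 1 \<Longrightarrow> sa_mat st n A \<Longrightarrow> sa_mat st k B \<Longrightarrow>
         \<nu> (n + k) (dsum n k A B) = max (\<nu> n A) (\<nu> k B)"
  using G unfolding mos_gauges_def by blast

lemma S0[simp]: "0 \<in> S" using S subspace_0 by blast
lemma Sadd: "x \<in> S \<Longrightarrow> y \<in> S \<Longrightarrow> x + y \<in> S" using S subspace_add by blast
lemma Sdiff: "x \<in> S \<Longrightarrow> y \<in> S \<Longrightarrow> x - y \<in> S" using S subspace_diff by blast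
lemma Sneg: "x \<in> S \<Longrightarrow> - x \<in> S" using S subspace_neg by blast
lemma Ssc: "x \<in> S \<Longrightarrow> sc c x \<in> S" using S subspace_scale by blast
lemma Ssum: "(\<And>x. x \<in> B \<Longrightarrow> f x \<in> S) \<Longrightarrow> sum f B \<in> S" using S subspace_sum by blast
lemma Sst'[simp]: "x \<in> S \<Longrightarrow> st x \<in> S" using Sst by blast

lemma sa_zero[simp]: "sa_mat st n (\<lambda>i j. 0)"
  by (simp add: sa_mat_def is_mat_def mstar_def)
lemma sain_zero[simp]: "sa_mat_in st n S (\<lambda>i j. 0)"
  by (simp add: sa_mat_in_def)
lemma msub_self[simp]: "msub (A::nat \<Rightarrow> nat \<Rightarrow> 'v) A = (\<lambda>i j. 0)"
  by (simp add: msub_def)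

lemma qg_ne: "sa_mat st n A \<Longrightarrow> {\<nu> n B |B. sa_mat st n B \<and> sa_mat_in st n S (msub B A)} \<noteq> {}"
proof -
  assume "sa_mat st n A"
  moreover have "sa_mat_in st n S (msub A A)" by simp
  ultimately show ?thesis by blast
qed

lemma qg_lower: "n \<ge> 1 \<Longrightarrow> sa_mat st n B \<Longrightarrow> sa_mat_in st n S (msub B A) \<Longrightarrow> qgauge st \<nu> S n A \<le> \<nu> n B"
  unfolding qgauge_def
  apply (rule cInf_lower)
   apply blast
  apply (rule bdd_belowI[where m=0])
  using nu_nonneg by blast

lemma qg_greatest: "sa_mat st n A \<Longrightarrow> (\<And>B. sa_mat st n B \<Longrightarrow> sa_mat_in st n S (msub B A) \<Longrightarrow> c \<le> \<nu> n B)
   \<Longrightarrow> c \<le> qgauge st \<nu> S n A"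
  unfolding qgauge_def
  apply (rule cInf_greatest)
  using qg_ne apply blast
  by blast

lemma qg_nonneg: "n \<ge> 1 \<Longrightarrow> sa_mat st n A \<Longrightarrow> 0 \<le> qgauge st \<nu> S n A"
  by (rule qg_greatest) (auto intro: nu_nonneg)

lemma qg_le_nu: "n \<ge> 1 \<Longrightarrow> sa_mat st n A \<Longrightarrow> qgauge st \<nu> S n A \<le> \<nu> n A"
  by (rule qg_lower) auto

lemma qg_less: "sa_mat st n A \<Longrightarrow> qgauge st \<nu> S n A < c \<Longrightarrow>
   \<exists>B. sa_mat st n B \<and> sa_mat_in st n S (msub B A) \<and> \<nu> n B < c"
  unfolding qgauge_def
  apply (drule cInf_lessD[rotated])
  using qg_ne apply blast
  by blast

lemma sa_madd: "sa_mat st n A \<Longrightarrow> sa_mat st n B \<Longrightarrow> sa_mat st n (madd A B)"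
  by (auto simp: sa_mat_def is_mat_def mstar_def madd_def fun_eq_iff)
lemma sain_madd: "sa_mat_in st n S A \<Longrightarrow> sa_mat_in st n S B \<Longrightarrow> sa_mat_in st n S (madd A B)"
  by (auto simp: sa_mat_in_def sa_madd) (auto simp: madd_def intro: Sadd)
lemma msub_madd: "msub (madd B1 B2) (madd (A1::nat \<Rightarrow> nat \<Rightarrow> 'v) A2) = madd (msub B1 A1) (msub B2 A2)"
  by (simp add: msub_def madd_def fun_eq_iff algebra_simps)

lemma sa_mneg: "sa_mat st n A \<Longrightarrow> sa_mat st n (mneg A)"
  by (auto simp: sa_mat_def is_mat_def mstar_def mneg_def fun_eq_iff)

lemma sa_mscale: "sa_mat st n A \<Longrightarrow> sa_mat st n (mscale sc (complex_of_real t) A)"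
  by (auto simp: sa_mat_def is_mat_def mstar_def mscale_def fun_eq_iff st_sc)
lemma sain_mscale: "sa_mat_in st n S A \<Longrightarrow> sa_mat_in st n S (mscale sc (complex_of_real t) A)"
  by (auto simp: sa_mat_in_def sa_mscale) (auto simp: mscale_def intro: Ssc)
lemma msub_mscale: "msub (mscale sc c B) (mscale sc c A) = mscale sc c (msub B A)"
  by (simp add: msub_def mscale_def fun_eq_iff scale_right_diff_distrib)
lemma mscale_inv: "t \<noteq> 0 \<Longrightarrow> mscale sc (complex_of_real (1/t)) (mscale sc (complex_of_real t) B) = B"
  by (simp add: mscale_def fun_eq_iff)

lemma sa_dsum: "sa_mat st n A \<Longrightarrow> sa_mat st k B \<Longrightarrow> sa_mat st (n+k) (dsum n k A B)"
  by (auto simp: sa_mat_def is_mat_def mstar_def dsum_def fun_eq_iff)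
lemma sain_dsum: "sa_mat_in st n S A \<Longrightarrow> sa_mat_in st k S B \<Longrightarrow> sa_mat_in st (n+k) S (dsum n k A B)"
  by (auto simp: sa_mat_in_def sa_dsum) (auto simp: dsum_def)
lemma msub_dsum: "msub (dsum n k B1 B2) (dsum n k (A1::nat \<Rightarrow> nat \<Rightarrow> 'v) A2) = dsum n k (msub B1 A1) (msub B2 A2)"
  by (simp add: msub_def dsum_def fun_eq_iff)

lemma sa_compress: "sa_mat st n A \<Longrightarrow> sa_mat st k (compress sc n k X A)"
proof -
  assume A: "sa_mat st n A"
  hence Aij: "st (A i j) = A j i" for i j
    unfolding sa_mat_def mstar_def by (metis)
  have "st (\<Sum>i<n. \<Sum>j<n. sc (cnj (X i b) * X j a) (A i j)) =
        (\<Sum>i<n. \<Sum>j<n. sc (cnj (X i a) * X j b) (A i j))" for a b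
    apply (simp add: st_sum st_sc Aij)
    apply (subst sum.swap)
    by (simp add: mult.commute)
  then show ?thesis
    by (auto simp: sa_mat_def is_mat_def mstar_def compress_def fun_eq_iff)
qed
lemma sain_compress: "sa_mat_in st n S A \<Longrightarrow> sa_mat_in st k S (compress sc n k X A)"
  by (auto simp: sa_mat_in_def sa_compress) (auto simp: compress_def intro!: Ssum Ssc)
lemma msub_compress: "msub (compress sc n k X B) (compress sc n k X A) = compress sc n k X (msub B A)"
  by (simp add: msub_def compress_def fun_eq_iff scale_right_diff_distrib sum_subtractf)

lemma qg_add: "n \<ge> 1 \<Longrightarrow> sa_mat st n A1 \<Longrightarrow> sa_mat st n A2 \<Longrightarrow>
   qgauge st \<nu> S n (madd A1 A2) \<le> qgauge st \<nu> S n A1 + qgauge st \<nu> S n A2"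
proof -
  assume n: "n \<ge> 1" and A1: "sa_mat st n A1" and A2: "sa_mat st n A2"
  let ?q = "qgauge st \<nu> S n (madd A1 A2)"
  have key: "?q \<le> \<nu> n B1 + \<nu> n B2" if "sa_mat st n B1" "sa_mat_in st n S (msub B1 A1)"
     "sa_mat st n B2" "sa_mat_in st n S (msub B2 A2)" for B1 B2
  proof -
    have "?q \<le> \<nu> n (madd B1 B2)"
      by (rule qg_lower) (use n that in \<open>auto simp: sa_madd sain_madd msub_madd\<close>)
    also have "\<dots> \<le> \<nu> n B1 + \<nu> n B2" by (rule nu_add) (use n that in auto)
    finally show ?thesis .
  qed
  have "?q - \<nu> n B2 \<le> qgauge st \<nu> S n A1" if "sa_mat st n B2" "sa_mat_in st n S (msub B2 A2)" for B2
    by (rule qg_greatest[OF A1]) (use key that in force)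
  hence "?q - qgauge st \<nu> S n A1 \<le> qgauge st \<nu> S n A2"
    by (intro qg_greatest[OF A2]) force
  thus ?thesis by simp
qed

lemma qg_scale: "n \<ge> 1 \<Longrightarrow> sa_mat st n A \<Longrightarrow> t > 0 \<Longrightarrow>
   qgauge st \<nu> S n (mscale sc (complex_of_real t) A) = t * qgauge st \<nu> S n A"
proof -
  assume n: "n \<ge> 1" and A: "sa_mat st n A" and t: "t > 0"
  let ?tA = "mscale sc (complex_of_real t) A"
  have tA: "sa_mat st n ?tA" using A by (rule sa_mscale)
  have "qgauge st \<nu> S n ?tA / t \<le> qgauge st \<nu> S n A"
  proof (rule qg_greatest[OF A])
    fix B assume B: "sa_mat st n B" "sa_mat_in st n S (msub B A)"
    have "qgauge st \<nu> S n ?tA \<le> \<nu> n (mscale sc (complex_of_real t) B)"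
      by (rule qg_lower) (use n B in \<open>auto simp: sa_mscale sain_mscale msub_mscale\<close>)
    also have "\<dots> = t * \<nu> n B" using n B t by (simp add: nu_scale)
    finally show "qgauge st \<nu> S n ?tA / t \<le> \<nu> n B" using t by (simp add: field_simps)
  qed
  hence le: "qgauge st \<nu> S n ?tA \<le> t * qgauge st \<nu> S n A" using t by (simp add: field_simps)
  have "t * qgauge st \<nu> S n A \<le> qgauge st \<nu> S n ?tA"
  proof -
    have "qgauge st \<nu> S n A \<le> \<nu> n B' / t" if B': "sa_mat st n B'" "sa_mat_in st n S (msub B' ?tA)" for B'
    proof -
      let ?B = "mscale sc (complex_of_real (1/t)) B'"
      have eq: "msub ?B A = mscale sc (complex_of_real (1/t)) (msub B' ?tA)"
        using t by (simp add: msub_def mscale_def fun_eq_iff scale_right_diff_distrib)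
      have sB: "sa_mat st n ?B" by (rule sa_mscale) fact
      have "sa_mat_in st n S (msub ?B A)" unfolding eq by (rule sain_mscale) fact
      hence "qgauge st \<nu> S n A \<le> \<nu> n ?B" by (rule qg_lower[OF n sB])
      also have "\<dots> = \<nu> n B' / t" using nu_scale[OF n B'(1), of "1/t"] t by simp
      finally show ?thesis .
    qed
    hence "\<And>B'. sa_mat st n B' \<Longrightarrow> sa_mat_in st n S (msub B' ?tA) \<Longrightarrow> t * qgauge st \<nu> S n A \<le> \<nu> n B'"
      using t by (simp add: field_simps)
    thus ?thesis by (rule qg_greatest[OF tA])
  qed
  with le show ?thesis by simp
qed

lemma qg_compress: "n \<ge> 1 \<Longrightarrow> k \<ge> 1 \<Longrightarrow> sa_mat st n A \<Longrightarrow> 0 \<le> c \<Longrightarrow> (opnorm n k X)\<^sup>2 \<le> c \<Longrightarrow>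
   qgauge st \<nu> S k (compress sc n k X A) \<le> c * qgauge st \<nu> S n A"
proof -
  assume n: "n \<ge> 1" and k: "k \<ge> 1" and A: "sa_mat st n A" and c: "0 \<le> c" "(opnorm n k X)\<^sup>2 \<le> c"
  let ?q = "qgauge st \<nu> S k (compress sc n k X A)"
  have key: "?q \<le> c * \<nu> n B" if B: "sa_mat st n B" "sa_mat_in st n S (msub B A)" for B
  proof -
    have "?q \<le> \<nu> k (compress sc n k X B)"
      by (rule qg_lower) (use k B in \<open>auto simp: sa_compress sain_compress msub_compress\<close>)
    also have "\<dots> \<le> (opnorm n k X)\<^sup>2 * \<nu> n B" by (rule nu_compress) (use n k B in auto)
    also have "\<dots> \<le> c * \<nu> n B" using c nu_nonneg[OF n B(1)] by (intro mult_right_mono) auto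
    finally show ?thesis .
  qed
  show ?thesis
  proof (cases "c = 0")
    case True
    then show ?thesis using key[of A] A by simp
  next
    case False
    hence "?q / c \<le> qgauge st \<nu> S n A"
      by (intro qg_greatest[OF A]) (use key c in \<open>auto simp: field_simps\<close>)
    then show ?thesis using c False by (simp add: field_simps)
  qed
qed

lemma qg_dsum_le: "n \<ge> 1 \<Longrightarrow> k \<ge> 1 \<Longrightarrow> sa_mat st n A \<Longrightarrow> sa_mat st k B \<Longrightarrow>
   qgauge st \<nu> S (n+k) (dsum n k A B) \<le> max (qgauge st \<nu> S n A) (qgauge st \<nu> S k B)"
proof (rule ccontr)
  assume n: "n \<ge> 1" and k: "k \<ge> 1" and A: "sa_mat st n A" and B: "sa_mat st k B"
    and "\<not> ?thesis"
  hence lt: "qgauge st \<nu> S n A < qgauge st \<nu> S (n+k) (dsum n k A B)"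
     "qgauge st \<nu> S k B < qgauge st \<nu> S (n+k) (dsum n k A B)" by auto
  obtain B1 where B1: "sa_mat st n B1" "sa_mat_in st n S (msub B1 A)" "\<nu> n B1 < qgauge st \<nu> S (n+k) (dsum n k A B)"
    using qg_less[OF A lt(1)] by blast
  obtain B2 where B2: "sa_mat st k B2" "sa_mat_in st k S (msub B2 B)" "\<nu> k B2 < qgauge st \<nu> S (n+k) (dsum n k A B)"
    using qg_less[OF B lt(2)] by blast
  have "qgauge st \<nu> S (n+k) (dsum n k A B) \<le> \<nu> (n+k) (dsum n k B1 B2)"
    by (rule qg_lower) (use n B1 B2 in \<open>auto simp: sa_dsum sain_dsum msub_dsum\<close>)
  also have "\<dots> = max (\<nu> n B1) (\<nu> k B2)" using n k B1 B2 by (simp add: nu_dsum)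
  finally show False using B1 B2 by linarith
qed

lemma compress_pinc: "s + m \<le> N \<Longrightarrow>
   compress sc N m (pinc s m) D = (\<lambda>a b. if a < m \<and> b < m then D (a+s) (b+s) else 0)"
proof -
  assume N: "s + m \<le> N"
  have "(\<Sum>i<N. \<Sum>j<N. sc (cnj (pinc s m i a) * pinc s m j b) (D i j)) = D (a+s) (b+s)"
    if ab: "a < m" "b < m" for a b
  proof -
    have inner: "(\<Sum>j<N. sc (cnj (pinc s m i a) * pinc s m j b) (D i j)) = sc (cnj (pinc s m i a)) (D i (b+s))" for i
      by (subst sum1[of "b+s"]) (use N ab in \<open>auto simp: pinc_def\<close>)
    show ?thesis unfolding inner
      by (subst sum1[of "a+s"]) (use N ab in \<open>auto simp: pinc_def\<close>)
  qed
  thus ?thesis by (auto simp: compress_def fun_eq_iff)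
qed

lemma compress_dsum1: "is_mat n A \<Longrightarrow> compress sc (n+k) n (pinc 0 n) (dsum n k A B) = A"
  by (subst compress_pinc) (auto simp: dsum_def is_mat_def fun_eq_iff)

lemma compress_dsum2: "is_mat k B \<Longrightarrow> compress sc (n+k) k (pinc n k) (dsum n k A B) = B"
  by (subst compress_pinc) (auto simp: dsum_def is_mat_def fun_eq_iff)

lemma qg_dsum: "n \<ge> 1 \<Longrightarrow> k \<ge> 1 \<Longrightarrow> sa_mat st n A \<Longrightarrow> sa_mat st k B \<Longrightarrow>
   qgauge st \<nu> S (n+k) (dsum n k A B) = max (qgauge st \<nu> S n A) (qgauge st \<nu> S k B)"
proof -
  assume n: "n \<ge> 1" and k: "k \<ge> 1" and A: "sa_mat st n A" and B: "sa_mat st k B"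
  have D: "sa_mat st (n+k) (dsum n k A B)" using A B by (rule sa_dsum)
  have "qgauge st \<nu> S n (compress sc (n+k) n (pinc 0 n) (dsum n k A B)) \<le> 1 * qgauge st \<nu> S (n+k) (dsum n k A B)"
    by (rule qg_compress) (use n k D opnorm_pinc[of 0 n "n+k"] in auto)
  hence 1: "qgauge st \<nu> S n A \<le> qgauge st \<nu> S (n+k) (dsum n k A B)"
    using A by (simp add: compress_dsum1 sa_mat_def)
  have "qgauge st \<nu> S k (compress sc (n+k) k (pinc n k) (dsum n k A B)) \<le> 1 * qgauge st \<nu> S (n+k) (dsum n k A B)"
    by (rule qg_compress) (use n k D opnorm_pinc[of n k "n+k"] in auto)
  hence 2: "qgauge st \<nu> S k B \<le> qgauge st \<nu> S (n+k) (dsum n k A B)"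
    using B by (simp add: compress_dsum2 sa_mat_def)
  show ?thesis using 1 2 qg_dsum_le[OF n k A B] by linarith
qed

lemma m1_compress: "m1 (compress sc n 1 X B 0 0) = compress sc n 1 X B"
  by (auto simp: m1_def compress_def fun_eq_iff)

lemma compress_split: "compress sc n k X B a b = compress sc n k X A a b + compress sc n k X (msub B A) a b"
proof -
  have "msub (compress sc n k X B) (compress sc n k X A) a b = compress sc n k X (msub B A) a b"
    by (simp add: msub_compress)
  thus ?thesis by (simp add: msub_def algebra_simps)
qed

lemma compress_mneg: "compress sc n k X (mneg A) a b = - compress sc n k X A a b"
  by (simp add: compress_def mneg_def sum_negf)

lemma compress_sa00: "sa_mat st n A \<Longrightarrow> st (compress sc n 1 X A 0 0) = compress sc n 1 X A 0 0"
  using sa_compress[of n A 1 X] unfolding sa_mat_def mstar_def by metis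

lemma compress_S00: "sa_mat_in st n S A \<Longrightarrow> compress sc n 1 X A 0 0 \<in> S"
  using sain_compress[of n A 1 X] unfolding sa_mat_in_def by blast

lemma compress_X1: "i < n \<Longrightarrow> compress sc n 1 (\<lambda>p _. if p = i then 1 else 0) A 0 0 = A i i"
proof -
  assume i: "i < n"
  have inner: "(\<Sum>q<n. sc (cnj (if p = i then 1 else 0) * (if q = i then 1 else 0)) (A p q)) =
     sc (cnj (if p = i then 1 else 0)) (A p i)" for p
    by (subst sum1[of i]) (use i in auto)
  show ?thesis unfolding compress_def using i
    by (simp only: inner) (subst sum1[of i], auto)
qed

lemma compress_X2: "i < n \<Longrightarrow> j < n \<Longrightarrow> i \<noteq> j \<Longrightarrow>
  compress sc n 1 (\<lambda>p _. if p = i then \<alpha> else if p = j then \<beta> else 0) A 0 0 =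
   (sc (cnj \<alpha> * \<alpha>) (A i i) + sc (cnj \<alpha> * \<beta>) (A i j)) + (sc (cnj \<beta> * \<alpha>) (A j i) + sc (cnj \<beta> * \<beta>) (A j j))"
proof -
  assume ij: "i < n" "j < n" "i \<noteq> j"
  let ?X = "\<lambda>p. if p = i then \<alpha> else if p = j then \<beta> else 0"
  have inner: "(\<Sum>q<n. sc (cnj (?X p) * ?X q) (A p q)) =
     sc (cnj (?X p) * \<alpha>) (A p i) + sc (cnj (?X p) * \<beta>) (A p j)" for p
    by (subst sum2[of i n j]) (use ij in auto)
  have "(\<Sum>p<n. \<Sum>q<n. sc (cnj (?X p) * ?X q) (A p q)) =
    (sc (cnj \<alpha> * \<alpha>) (A i i) + sc (cnj \<alpha> * \<beta>) (A i j)) + (sc (cnj \<beta> * \<alpha>) (A j i) + sc (cnj \<beta> * \<beta>) (A j j))"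
    unfolding inner by (subst sum2[of i n j]) (use ij in auto)
  thus ?thesis unfolding compress_def by simp
qed

lemma squeeze0: "(\<And>m. 0 \<le> f m) \<Longrightarrow> (\<And>m. f m \<le> c * inverse (real (Suc m))) \<Longrightarrow> f \<longlonglongrightarrow> (0::real)"
proof -
  assume f: "\<And>m. 0 \<le> f m" "\<And>m. f m \<le> c * inverse (real (Suc m))"
  have "(\<lambda>m. c * inverse (real (Suc m))) \<longlonglongrightarrow> c * 0"
    by (intro tendsto_mult tendsto_const LIMSEQ_inverse_real_of_nat)
  thus ?thesis using f by (intro tendsto_sandwich[of "\<lambda>_. 0" f sequentially "\<lambda>m. c * inverse (real (Suc m))"]) auto
qed

end

locale qctx_gi = qctx +
  assumes GI: "gauge_ideal {x. st x = x} (\<lambda>x. \<nu> 1 (m1 x)) (S \<inter> {x. st x = x})"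
begin

lemma approx_seq: "sa_mat st n A \<Longrightarrow> qgauge st \<nu> S n A = 0 \<Longrightarrow>
  \<exists>B. \<forall>m. sa_mat st n (B m) \<and> sa_mat_in st n S (msub (B m) A) \<and> \<nu> n (B m) < inverse (real (Suc m))"
proof -
  assume A: "sa_mat st n A" and q: "qgauge st \<nu> S n A = 0"
  have "\<forall>m. \<exists>B. sa_mat st n B \<and> sa_mat_in st n S (msub B A) \<and> \<nu> n B < inverse (real (Suc m))"
    using qg_less[OF A] q by simp
  thus ?thesis by (rule choice)
qed

lemma col_in_S: "n \<ge> 1 \<Longrightarrow> sa_mat st n A \<Longrightarrow> qgauge st \<nu> S n A = 0 \<Longrightarrow> qgauge st \<nu> S n (mneg A) = 0 \<Longrightarrow>
   (\<And>p. cmod (X p 0) \<le> 1) \<Longrightarrow> compress sc n 1 X A 0 0 \<in> S"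
proof -
  assume n: "n \<ge> 1" and A: "sa_mat st n A" and q: "qgauge st \<nu> S n A = 0" "qgauge st \<nu> S n (mneg A) = 0"
    and X: "\<And>p. cmod (X p 0) \<le> 1"
  have nA: "sa_mat st n (mneg A)" using A by (rule sa_mneg)
  obtain B where B: "\<And>m. sa_mat st n (B m)" "\<And>m. sa_mat_in st n S (msub (B m) A)"
     "\<And>m. \<nu> n (B m) < inverse (real (Suc m))"
    using approx_seq[OF A q(1)] by blast
  obtain B' where B': "\<And>m. sa_mat st n (B' m)" "\<And>m. sa_mat_in st n S (msub (B' m) (mneg A))"
     "\<And>m. \<nu> n (B' m) < inverse (real (Suc m))"
    using approx_seq[OF nA q(2)] by blast
  define y where "y = compress sc n 1 X A 0 0"
  define a where "a m = - compress sc n 1 X (msub (B m) A) 0 0" for m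
  define b where "b m = compress sc n 1 X (msub (B' m) (mneg A)) 0 0" for m
  have ya: "y - a m = compress sc n 1 X (B m) 0 0" for m
    unfolding y_def a_def using compress_split[of n 1 X "B m" 0 0 A] by simp
  have yb: "b m - y = compress sc n 1 X (B' m) 0 0" for m
    unfolding y_def b_def using compress_split[of n 1 X "B' m" 0 0 "mneg A"] by (simp add: compress_mneg)
  have bnd: "\<nu> 1 (compress sc n 1 X C) \<le> real n * inverse (real (Suc m))"
    if C: "sa_mat st n C" "\<nu> n C < inverse (real (Suc m))" for C m
  proof -
    have "\<nu> 1 (compress sc n 1 X C) \<le> (opnorm n 1 X)\<^sup>2 * \<nu> n C" by (rule nu_compress) (use n C in auto)
    also have "\<dots> \<le> real n * \<nu> n C" using opnorm_col[of X n, OF X] nu_nonneg[OF n C(1)]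
      by (intro mult_right_mono) auto
    also have "\<dots> \<le> real n * inverse (real (Suc m))" using C(2) by (intro mult_left_mono) auto
    finally show ?thesis .
  qed
  have l1: "(\<lambda>m. \<nu> 1 (m1 (y - a m))) \<longlonglongrightarrow> 0"
  proof (rule squeeze0)
    fix m
    show "0 \<le> \<nu> 1 (m1 (y - a m))" unfolding ya m1_compress
      by (rule nu_nonneg) (use B sa_compress in auto)
    show "\<nu> 1 (m1 (y - a m)) \<le> real n * inverse (real (Suc m))" unfolding ya m1_compress
      using bnd B by blast
  qed
  have l2: "(\<lambda>m. \<nu> 1 (m1 (b m - y))) \<longlonglongrightarrow> 0"
  proof (rule squeeze0)
    fix m
    show "0 \<le> \<nu> 1 (m1 (b m - y))" unfolding yb m1_compress
      by (rule nu_nonneg) (use B' sa_compress in auto)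
    show "\<nu> 1 (m1 (b m - y)) \<le> real n * inverse (real (Suc m))" unfolding yb m1_compress
      using bnd B' by blast
  qed
  have aS: "a m \<in> S \<inter> {x. st x = x}" for m
  proof -
    have "sa_mat st n (msub (B m) A)" using B(2) unfolding sa_mat_in_def by blast
    thus ?thesis unfolding a_def using compress_S00[OF B(2)] compress_sa00
      by (auto intro: Sneg)
  qed
  have bS: "b m \<in> S \<inter> {x. st x = x}" for m
  proof -
    have "sa_mat st n (msub (B' m) (mneg A))" using B'(2) unfolding sa_mat_in_def by blast
    thus ?thesis unfolding b_def using compress_S00[OF B'(2)] compress_sa00
      by auto
  qed
  have ysa: "y \<in> {x. st x = x}" unfolding y_def using compress_sa00[OF A] by simp
  have "y \<in> S \<inter> {x. st x = x}"
    using GI ysa aS bS l1 l2 unfolding gauge_ideal_def by blast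
  thus ?thesis unfolding y_def by blast
qed

lemma qg_proper: "n \<ge> 1 \<Longrightarrow> sa_mat st n A \<Longrightarrow> qgauge st \<nu> S n A = 0 \<Longrightarrow> qgauge st \<nu> S n (mneg A) = 0 \<Longrightarrow>
   A i j \<in> S"
proof -
  assume n: "n \<ge> 1" and A: "sa_mat st n A" and q: "qgauge st \<nu> S n A = 0" "qgauge st \<nu> S n (mneg A) = 0"
  note C = col_in_S[OF n A q]
  have Aij: "st (A i j) = A j i" for i j using A unfolding sa_mat_def mstar_def by metis
  have diag: "A i i \<in> S" if "i < n" for i
    using C[of "\<lambda>p _. if p = i then 1 else 0"] compress_X1[OF that, of A] by simp
  show ?thesis
  proof (cases "i < n \<and> j < n")
    case False
    then have "A i j = 0" using A unfolding sa_mat_def is_mat_def by blast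
    then show ?thesis by simp
  next
    case True
    show ?thesis
    proof (cases "i = j")
      case True
      then show ?thesis using diag \<open>i < n \<and> j < n\<close> by blast
    next
      case False
      have ij: "i < n" "j < n" "i \<noteq> j" using True False by auto
      have y1: "(A i i + A i j) + (A j i + A j j) \<in> S"
        using C[of "\<lambda>p _. if p = i then 1 else if p = j then 1 else 0"] compress_X2[OF ij, of 1 1 A] by simp
      have y2: "(A i i + sc \<i> (A i j)) + (sc (- \<i>) (A j i) + A j j) \<in> S"
        using C[of "\<lambda>p _. if p = i then 1 else if p = j then \<i> else 0"] compress_X2[OF ij, of 1 \<i> A] by simp
      have u: "A i j + A j i \<in> S"
      proof -
        have "A i j + A j i = ((A i i + A i j) + (A j i + A j j)) - A i i - A j j" by (simp add: algebra_simps)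
        thus ?thesis using y1 diag ij by (metis Sdiff)
      qed
      have w: "sc \<i> (A i j) + sc (- \<i>) (A j i) \<in> S"
      proof -
        have "sc \<i> (A i j) + sc (- \<i>) (A j i) = ((A i i + sc \<i> (A i j)) + (sc (- \<i>) (A j i) + A j j)) - A i i - A j j"
          by (simp add: algebra_simps)
        thus ?thesis using y2 diag ij by (metis Sdiff)
      qed
      have v: "A i j - A j i \<in> S"
      proof -
        have "sc (- \<i>) (sc \<i> (A i j) + sc (- \<i>) (A j i)) = A i j - A j i"
          by (simp add: scale_right_distrib scale_right_diff_distrib)
        thus ?thesis using w by (metis Ssc)
      qed
      have "A i j = sc (1/2) (A i j + A j i) + sc (1/2) (A i j - A j i)"
      proof -
        have "sc (1/2) (A i j + A j i) + sc (1/2) (A i j - A j i) = sc (1/2) (A i j) + sc (1/2) (A i j)"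
          by (simp add: scale_right_distrib scale_right_diff_distrib)
        also have "\<dots> = sc (1/2 + 1/2) (A i j)" by (simp only: scale_left_distrib)
        finally show ?thesis by simp
      qed
      then show ?thesis using u v by (metis Sadd Ssc)
    qed
  qed
qed

end

lemma part1:
  fixes scV :: "complex \<Rightarrow> 'v::ab_group_add \<Rightarrow> 'v" and stV :: "'v \<Rightarrow> 'v"
    and \<nu> :: "nat \<Rightarrow> (nat \<Rightarrow> nat \<Rightarrow> 'v) \<Rightarrow> real" and S :: "'v set"
    and scW :: "complex \<Rightarrow> 'w::ab_group_add \<Rightarrow> 'w" and stW \<omega> \<phi>
  assumes V: "linf_mos scV stV \<nu>" and S: "module.subspace scV S"
    and W: "linf_mos scW stW \<omega>" and P: "cg_bounded scV stV \<nu> scW stW \<omega> \<phi>" and K: "{x. \<phi> x = 0} = S"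
  shows "mos_ideal scV stV \<nu> S"
proof -
  have lin: "Vector_Spaces.linear scV scW \<phi>" and stc: "\<And>x. \<phi> (stV x) = stW (\<phi> x)"
    using P unfolding cg_bounded_def by auto
  obtain C where C: "C > 0" "\<And>n A. n \<ge> 1 \<Longrightarrow> sa_mat stV n A \<Longrightarrow> \<omega> n (mmap \<phi> A) \<le> C * \<nu> n A"
    using P unfolding cg_bounded_def by blast
  interpret lin: Vector_Spaces.linear scV scW \<phi> by (rule lin)
  interpret sV: additive stV using V unfolding linf_mos_def star_space_def by unfold_locales auto
  interpret sW: additive stW using W unfolding linf_mos_def star_space_def by unfold_locales auto
  have Ss: "\<forall>x\<in>S. stV x \<in> S"
  proof
    fix x assume "x \<in> S"
    hence "\<phi> x = 0" using K by blast
    hence "\<phi> (stV x) = 0" by (simp add: stc sW.zero)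
    thus "stV x \<in> S" using K by blast
  qed
  have GW: "mos_gauges scW stW \<omega> (\<lambda>n A. A = (\<lambda>i j. 0))" using W unfolding linf_mos_def by blast
  have gi: "gauge_ideal {x. stV x = x} (\<lambda>x. \<nu> 1 (m1 x)) (S \<inter> {x. stV x = x})"
    unfolding gauge_ideal_def
  proof (intro ballI allI impI)
    fix x a b assume x: "x \<in> {x. stV x = x}" and a: "\<forall>j. a j \<in> S \<inter> {x. stV x = x}"
      and b: "\<forall>j. b j \<in> S \<inter> {x. stV x = x}"
      and la: "(\<lambda>j. \<nu> 1 (m1 (x - a j))) \<longlonglongrightarrow> 0" and lb: "(\<lambda>j. \<nu> 1 (m1 (b j - x))) \<longlonglongrightarrow> 0"
    let ?z = "\<phi> x"
    have pa: "\<phi> (a j) = 0" "\<phi> (b j) = 0" for j using a b K by blast+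
    have sa1: "sa_mat stV 1 (m1 y)" if "stV y = y" for y
      using that by (auto simp: sa_mat_def is_mat_def mstar_def m1_def fun_eq_iff sV.zero)
    have saW: "sa_mat stW 1 (m1 y)" if "stW y = y" for y
      using that by (auto simp: sa_mat_def is_mat_def mstar_def m1_def fun_eq_iff sW.zero)
    have zsa: "stW ?z = ?z" using x by (simp add: stc[symmetric])
    have ma: "mmap \<phi> (m1 (x - a j)) = m1 ?z" for j
      by (auto simp: mmap_def m1_def fun_eq_iff lin.diff pa)
    have mb: "mmap \<phi> (m1 (b j - x)) = mneg (m1 ?z)" for j
      by (auto simp: mmap_def mneg_def m1_def fun_eq_iff lin.diff pa)
    have mnm: "mneg (m1 ?z) = m1 (- ?z)" by (auto simp: mneg_def m1_def fun_eq_iff)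
    have ba: "\<omega> 1 (m1 ?z) \<le> C * \<nu> 1 (m1 (x - a j))" for j
      using C(2)[of 1 "m1 (x - a j)"] ma[of j] sa1[of "x - a j"] a x by (simp add: sV.diff)
    have bb: "\<omega> 1 (mneg (m1 ?z)) \<le> C * \<nu> 1 (m1 (b j - x))" for j
      using C(2)[of 1 "m1 (b j - x)"] mb[of j] sa1[of "b j - x"] b x by (simp add: sV.diff)
    have "\<omega> 1 (m1 ?z) \<le> C * 0"
      by (rule LIMSEQ_le_const[OF tendsto_mult[OF tendsto_const la]]) (use ba in auto)
    moreover have "\<omega> 1 (mneg (m1 ?z)) \<le> C * 0"
      by (rule LIMSEQ_le_const[OF tendsto_mult[OF tendsto_const lb]]) (use bb in auto)
    moreover have "0 \<le> \<omega> 1 (m1 ?z)" using GW saW[OF zsa] unfolding mos_gauges_def by auto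
    moreover have "0 \<le> \<omega> 1 (mneg (m1 ?z))" using GW saW[of "- ?z"] zsa sW.minus unfolding mos_gauges_def mnm
      by auto
    ultimately have "m1 ?z = (\<lambda>i j. 0)" using GW saW[OF zsa] unfolding mos_gauges_def by auto
    hence "?z = 0" unfolding m1_def by (metis)
    thus "x \<in> S \<inter> {x. stV x = x}" using K x by blast
  qed
  show ?thesis unfolding mos_ideal_def using S Ss gi by blast
qed

theorem theorem3p20:
  fixes scV :: "complex \<Rightarrow> 'v::ab_group_add \<Rightarrow> 'v"
    and stV :: "'v \<Rightarrow> 'v"
    and \<nu> :: "nat \<Rightarrow> (nat \<Rightarrow> nat \<Rightarrow> 'v) \<Rightarrow> real"
    and S :: "'v set"
  assumes V: "linf_mos scV stV \<nu>"
    and S: "module.subspace scV S"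
  shows "(\<forall>(scW :: complex \<Rightarrow> 'w::ab_group_add \<Rightarrow> 'w) stW \<omega> \<phi>.
            linf_mos scW stW \<omega> \<and> cg_bounded scV stV \<nu> scW stW \<omega> \<phi> \<and> {x. \<phi> x = 0} = S
            \<longrightarrow> mos_ideal scV stV \<nu> S)
       \<and> (mos_ideal scV stV \<nu> S \<longrightarrow>
            quotient_linf_mos scV stV \<nu> S \<and>
            (\<forall>n\<ge>1. \<forall>A. sa_mat stV n A \<longrightarrow> qgauge stV \<nu> S n A \<le> \<nu> n A) \<and>
            {x. qmap S x = qmap S 0} = S)"
proof (intro conjI impI allI)
  fix scW :: "complex \<Rightarrow> 'w::ab_group_add \<Rightarrow> 'w" and stW \<omega> \<phi>
  assume "linf_mos scW stW \<omega> \<and> cg_bounded scV stV \<nu> scW stW \<omega> \<phi> \<and> {x. \<phi> x = 0} = S"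
  thus "mos_ideal scV stV \<nu> S" using part1[OF V S] by blast
next
  assume MI: "mos_ideal scV stV \<nu> S"
  have vs: "vector_space scV" using V unfolding linf_mos_def star_space_def by blast
  interpret vector_space scV by (rule vs)
  interpret Q: qctx_gi scV stV \<nu> S
    using MI V S vs unfolding mos_ideal_def
    by (intro qctx_gi.intro qctx.intro qctx_gi_axioms.intro qctx_axioms.intro) auto
  have gauges: "mos_gauges scV stV (qgauge stV \<nu> S) (\<lambda>n A. \<forall>i j. A i j \<in> S)"
    unfolding mos_gauges_def
  proof (intro conjI allI impI)
    show "0 \<le> qgauge stV \<nu> S n A" if "n \<ge> 1" "sa_mat stV n A" for n A using Q.qg_nonneg that .
    show "qgauge stV \<nu> S n (madd A B) \<le> qgauge stV \<nu> S n A + qgauge stV \<nu> S n B"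
      if "n \<ge> 1" "sa_mat stV n A" "sa_mat stV n B" for n A B using Q.qg_add that .
    show "qgauge stV \<nu> S n (mscale scV (complex_of_real t) A) = t * qgauge stV \<nu> S n A"
      if "n \<ge> 1" "sa_mat stV n A" "0 < t" for n A t using Q.qg_scale that .
    show "A i j \<in> S" if "n \<ge> 1" "sa_mat stV n A" "qgauge stV \<nu> S n A = 0" "qgauge stV \<nu> S n (mneg A) = 0"
      for n A i j using Q.qg_proper that .
    show "qgauge stV \<nu> S k (compress scV n k X A) \<le> (opnorm n k X)\<^sup>2 * qgauge stV \<nu> S n A"
      if "n \<ge> 1" "k \<ge> 1" "sa_mat stV n A" for n k X A
      by (rule Q.qg_compress) (use that in auto)
    show "qgauge stV \<nu> S (n + k) (dsum n k A B) = max (qgauge stV \<nu> S n A) (qgauge stV \<nu> S k B)"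
      if "n \<ge> 1" "k \<ge> 1" "sa_mat stV n A" "sa_mat stV k B" for n k A B using Q.qg_dsum that .
  qed
  show "quotient_linf_mos scV stV \<nu> S"
    unfolding quotient_linf_mos_def using V S MI gauges unfolding linf_mos_def mos_ideal_def by blast
  show "qgauge stV \<nu> S n A \<le> \<nu> n A" if "1 \<le> n" "sa_mat stV n A" for n A
    using Q.qg_le_nu that .
  show "{x. qmap S x = qmap S 0} = S"
  proof (intro set_eqI iffI)
    fix x assume "x \<in> {x. qmap S x = qmap S 0}"
    hence "(\<lambda>s. x + s) ` S = S" unfolding qmap_def by simp
    moreover have "x + 0 \<in> (\<lambda>s. x + s) ` S" using Q.S0 by blast
    ultimately show "x \<in> S" by simp
  next
    fix x assume x: "x \<in> S"
    have "(\<lambda>s. x + s) ` S = S"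
    proof
      show "(\<lambda>s. x + s) ` S \<subseteq> S" using x Q.Sadd by blast
      show "S \<subseteq> (\<lambda>s. x + s) ` S"
      proof
        fix s assume "s \<in> S"
        hence "s - x \<in> S" using x Q.Sdiff by blast
        moreover have "s = x + (s - x)" by simp
        ultimately show "s \<in> (\<lambda>s. x + s) ` S" by blast
      qed
    qed
    thus "x \<in> {x. qmap S x = qmap S 0}" unfolding qmap_def by simp
  qed
qed

end
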